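(* Consider the setting in the context, with $V>0$. Assume the random vectors $(T_1(t),\dots,T_K(t))$ are i.i.d. over slots. Let $S^*_{tot}$ denote the maximum, over all policies choosing $T_s(t)\in[0,T_s^{\max}]$, of $\liminf_{t\to\infty}\frac1t\sum_{\tau=0}^{t-1}\mathbb E[S_{tot}(\tau)]$ subject to $\limsup_{t\to\infty}\frac1t\sum_{\tau=0}^{t-1}\mathbb E[E_k(\tau)]\le E_k^{tot}$ for all $k$. Assume there is $\epsilon>0$ and a stationary randomized policy (choosing $T_s(t)\in[0,T_s^{\max}]$ as a possibly randomized function of the current $(T_1(t),\dots,T_K(t))$ only) under which $\mathbb E[S_{tot}(t)]=S^*_{tot}$ and $\mathbb E[E_k(t)]\le E_k^{tot}-\epsilon$ for all $k$. Let the EAD-PPDU policy choose at each slot $$T_s^*(t)\in\arg\max_{0\le T_s\le T_s^{\max}}\Big\{\sum_{k=1}^K\Big(F_k(t)-\frac{Y_k(t)}{V}E_k(t)\Big)\Big\},$$ with $Y_k(0)=0$. Then under EAD-PPDU, for every $t$, $$\Delta(\mathbf Y(t))-V\,\mathbb E[S_{tot}(t)\mid\mathbf Y(t)]\le B_2-\epsilon\sum_{k=1}^KY_k(t)-VS^*_{tot},$$ and consequently $$\limsup_{T\to\infty}\frac1T\sum_{t=0}^{T-1}\sum_{k=1}^K\mathbb E[Y_k(t)]\le\frac{B_2+VK}{\epsilon},\qquad \liminf_{T\to\infty}\frac1T\sum_{t=0}^{T-1}\mathbb E[S_{tot}(t)]\ge S^*_{tot}-\frac{B_2}{V},$$ where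 $B_2=\tfrac12K\big(E_{\max}^2+(E^{tot}_{\max})^2\big)$.
   Context: At each slot $t$, each of $K$ users has a transmission duration $T_k(t)\ge0$ (time needed to empty its buffer). A scheduling duration $T_s(t)\in[0,T_s^{\max}]$ is chosen. $F_k(t)=1$ if $T_s(t)\ge T_k(t)$, else $0$; $S_{tot}(t)=\sum_{k=1}^KF_k(t)$. Each user transmits (data plus padding) at fixed power $P>0$ for the whole duration, consuming energy $E_k(t)=T_s(t)P$; $E_{\max}=T_s^{\max}P$. Energy budgets $E_k^{tot}>0$, $E^{tot}_{\max}=\max_kE_k^{tot}$. Virtual queues $Y_k(t+1)=\max\{Y_k(t)-E_k^{tot},0\}+E_k(t)$, $\mathbf Y(t)=(Y_1(t),\dots,Y_K(t))$. $L(\mathbf Y)=\tfrac12\sum_kY_k^2$, $\Delta(\mathbf Y(t))=\mathbb E[L(\mathbf Y(t+1))-L(\mathbf Y(t))\mid\mathbf Y(t)]$. *)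

theory Defs
  imports "HOL-Probability.Probability"
begin

text \<open>Users are indexed by a finite type 'k, so K = CARD('k).
  A vector of transmission durations (T_1,...,T_K) is a function 'k => real.\<close>

definition vspace :: "('k::finite \<Rightarrow> real) measure" where
  "vspace = (\<Pi>\<^sub>M k\<in>UNIV. borel)"

definition Fk :: "real \<Rightarrow> real \<Rightarrow> real" where
  "Fk ts Tk = (if ts \<ge> Tk then 1 else 0)"

definition Stot :: "real \<Rightarrow> ('k::finite \<Rightarrow> real) \<Rightarrow> real" where
  "Stot ts x = (\<Sum>k\<in>UNIV. Fk ts (x k))"

definition Lyap :: "('k::finite \<Rightarrow> real) \<Rightarrow> real" where
  "Lyap y = 1/2 * (\<Sum>k\<in>UNIV. (y k)^2)"

text \<open>EAD-PPDU per-slot objective: sum_k (F_k - Y_k/V * E_k), with E_k = ts * P.\<close>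
definition ead_obj :: "real \<Rightarrow> real \<Rightarrow> ('k::finite \<Rightarrow> real) \<Rightarrow> ('k \<Rightarrow> real) \<Rightarrow> real \<Rightarrow> real" where
  "ead_obj V P x y ts = (\<Sum>k\<in>UNIV. Fk ts (x k) - y k / V * (ts * P))"

text \<open>Virtual queues under EAD-PPDU along a realisation xs of the duration vectors;
  sel t x y is the scheduling duration chosen at slot t given durations x and queues y.\<close>
primrec ead_Y :: "real \<Rightarrow> ('k \<Rightarrow> real) \<Rightarrow> (nat \<Rightarrow> ('k \<Rightarrow> real) \<Rightarrow> ('k \<Rightarrow> real) \<Rightarrow> real)
    \<Rightarrow> (nat \<Rightarrow> 'k \<Rightarrow> real) \<Rightarrow> nat \<Rightarrow> 'k \<Rightarrow> real" where
  "ead_Y P Etot sel xs 0 = (\<lambda>k. 0)"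
| "ead_Y P Etot sel xs (Suc t) =
     (\<lambda>k. max (ead_Y P Etot sel xs t k - Etot k) 0 + sel t (xs t) (ead_Y P Etot sel xs t) * P)"

definition is_policy :: "'a measure \<Rightarrow> real \<Rightarrow> (nat \<Rightarrow> 'a \<Rightarrow> real) \<Rightarrow> bool" where
  "is_policy M Tmax Ts \<longleftrightarrow>
     (\<forall>t. Ts t \<in> borel_measurable M \<and> (\<forall>\<omega>\<in>space M. 0 \<le> Ts t \<omega> \<and> Ts t \<omega> \<le> Tmax))"

definition opt_Stot :: "'a measure \<Rightarrow> (nat \<Rightarrow> 'a \<Rightarrow> ('k::finite \<Rightarrow> real)) \<Rightarrow> real \<Rightarrow> real
    \<Rightarrow> ('k \<Rightarrow> real) \<Rightarrow> ereal" where
  "opt_Stot M X P Tmax Etot =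
     Sup {liminf (\<lambda>t. ereal (1 / real t * (\<Sum>\<tau><t. (\<integral>\<omega>. Stot (Ts \<tau> \<omega>) (X \<tau> \<omega>) \<partial>M)))) | Ts.
            is_policy M Tmax Ts \<and>
            (\<forall>k. limsup (\<lambda>t. ereal (1 / real t * (\<Sum>\<tau><t. (\<integral>\<omega>. Ts \<tau> \<omega> * P \<partial>M))))
                   \<le> ereal (Etot k))}"

end

theory Submission
  imports Defs
begin

lemma ead_Y_nonneg:
  assumes "\<And>t x y. 0 \<le> sel t x y" "P \<ge> 0"
  shows "0 \<le> ead_Y P Etot sel xs t k"
  by (induction t) (auto intro!: add_nonneg_nonneg mult_nonneg_nonneg assms)

lemma ead_Y_le:
  assumes "\<And>t x y. 0 \<le> sel t x y \<and> sel t x y \<le> Tmax" "P \<ge> 0" "\<And>k. Etot k \<ge> 0"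
  shows "ead_Y P Etot sel xs t k \<le> real t * (Tmax * P)"
proof (induction t)
  case 0 then show ?case by simp
next
  case (Suc t)
  have "0 \<le> ead_Y P Etot sel xs t k" using ead_Y_nonneg[of sel P] assms by auto
  moreover have "sel t (xs t) (ead_Y P Etot sel xs t) * P \<le> Tmax * P"
    using assms by (intro mult_right_mono) auto
  ultimately show ?case using Suc assms(3)[of k] by (auto simp: algebra_simps)
qed

lemma ead_Y_cong:
  "(\<And>s. s < t \<Longrightarrow> xs s = xs' s) \<Longrightarrow> ead_Y P Etot sel xs t = ead_Y P Etot sel xs' t"
  by (induction t) auto

lemma ead_Y_meas:
  fixes sel :: "nat \<Rightarrow> ('k::finite \<Rightarrow> real) \<Rightarrow> ('k \<Rightarrow> real) \<Rightarrow> real"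
  assumes sm: "\<And>t. (\<lambda>(x, y). sel t x y) \<in> borel_measurable (vspace \<Otimes>\<^sub>M vspace)"
  shows "n \<le> t \<Longrightarrow> (\<lambda>z. ead_Y P Etot sel (\<lambda>s. z s) n) \<in> PiM {..<t} (\<lambda>_. vspace) \<rightarrow>\<^sub>M (vspace :: ('k \<Rightarrow> real) measure)"
proof (induction n)
  case 0
  then show ?case by (simp add: vspace_def, intro measurable_const) (simp add: space_PiM)
next
  case (Suc n)
  then have IH: "(\<lambda>z. ead_Y P Etot sel (\<lambda>s. z s) n) \<in> PiM {..<t} (\<lambda>_. vspace) \<rightarrow>\<^sub>M vspace" by simp
  have zn: "(\<lambda>z. z n) \<in> PiM {..<t} (\<lambda>_. vspace) \<rightarrow>\<^sub>M (vspace :: ('k \<Rightarrow> real) measure)"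
    using Suc by (intro measurable_component_singleton) auto
  have s: "(\<lambda>z. sel n (z n) (ead_Y P Etot sel (\<lambda>s. z s) n)) \<in> borel_measurable (PiM {..<t} (\<lambda>_. vspace))"
    using measurable_compose[OF measurable_Pair[OF zn IH] sm[of n]] by simp
  have comp: "(\<lambda>z. ead_Y P Etot sel (\<lambda>s. z s) n k) \<in> borel_measurable (PiM {..<t} (\<lambda>_. vspace))" for k
    using measurable_compose[OF IH[unfolded vspace_def] measurable_component_singleton[of k UNIV "\<lambda>_. borel"]]
    by (simp add: vspace_def)
  show ?case
    unfolding vspace_def
    by (rule measurable_PiM_single') (use s comp in \<open>auto simp: vspace_def\<close>)
qed

lemma drift_k:
  fixes y E e :: real
  assumes "0 \<le> y" "0 \<le> e" "0 \<le> E"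
  shows "(max (y - E) 0 + e)^2 - y^2 \<le> E^2 + e^2 - 2*y*(E - e)"
proof (cases "y - E \<ge> 0")
  case True
  have "0 \<le> E * e" using assms by simp
  then show ?thesis using True by (simp add: power2_eq_square algebra_simps)
next
  case False
  then have "(max (y - E) 0 + e)^2 = e^2" by simp
  moreover have "0 \<le> (y - E)^2 + 2*y*e" using assms by simp
  ultimately show ?thesis by (simp add: power2_eq_square algebra_simps)
qed


lemma indep_prod:
  fixes M :: "'a measure" and X :: "nat \<Rightarrow> 'a \<Rightarrow> ('k::finite \<Rightarrow> real)"
    and sel :: "nat \<Rightarrow> ('k \<Rightarrow> real) \<Rightarrow> ('k \<Rightarrow> real) \<Rightarrow> real"
    and \<psi> \<phi> :: "('k \<Rightarrow> real) \<Rightarrow> real" and Bp Bf :: real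
  assumes M: "prob_space M"
    and X_meas: "\<And>t. X t \<in> M \<rightarrow>\<^sub>M vspace"
    and X_indep: "prob_space.indep_vars M (\<lambda>_. vspace) X UNIV"
    and sm: "\<And>t. (\<lambda>(x, y). sel t x y) \<in> borel_measurable (vspace \<Otimes>\<^sub>M vspace)"
    and psi: "\<psi> \<in> borel_measurable vspace" "\<And>\<omega>. \<omega> \<in> space M \<Longrightarrow> \<bar>\<psi> (ead_Y P Etot sel (\<lambda>s. X s \<omega>) t)\<bar> \<le> Bp"
    and phi: "\<phi> \<in> borel_measurable vspace" "\<And>x. \<bar>\<phi> x\<bar> \<le> Bf"
  shows "(\<integral>\<omega>. \<psi> (ead_Y P Etot sel (\<lambda>s. X s \<omega>) t) * \<phi> (X t \<omega>) \<partial>M)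
       = (\<integral>\<omega>. \<psi> (ead_Y P Etot sel (\<lambda>s. X s \<omega>) t) \<partial>M) * (\<integral>\<omega>. \<phi> (X t \<omega>) \<partial>M)"
proof -
  interpret prob_space M by (rule M)
  define Z where "Z = (\<lambda>\<omega>. restrict (\<lambda>i. X i \<omega>) {..<t})"
  define W where "W = (\<lambda>\<omega>. restrict (\<lambda>i. X i \<omega>) {t})"
  have iv: "indep_var (PiM {..<t} (\<lambda>_. vspace)) Z (PiM {t} (\<lambda>_. vspace)) W"
    unfolding Z_def W_def by (rule indep_var_restrict[OF X_indep]) auto
  define G where "G = (\<lambda>z. ead_Y P Etot sel (\<lambda>s. z s) t)"
  have Gm: "G \<in> PiM {..<t} (\<lambda>_. vspace) \<rightarrow>\<^sub>M vspace"
    unfolding G_def by (rule ead_Y_meas[OF sm]) simp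
  have g1: "(\<psi> \<circ> G) \<in> borel_measurable (PiM {..<t} (\<lambda>_. vspace))"
    using Gm psi(1) by (simp add: comp_def)
  have g2: "(\<phi> \<circ> (\<lambda>w. w t)) \<in> borel_measurable (PiM {t} (\<lambda>_. vspace))"
    using measurable_compose[OF measurable_component_singleton[of t "{t}" "\<lambda>_. vspace"] phi(1)]
    by (simp add: comp_def)
  have iv2: "indep_var borel ((\<psi> \<circ> G) \<circ> Z) borel ((\<phi> \<circ> (\<lambda>w. w t)) \<circ> W)"
    by (rule indep_var_compose[OF iv g1 g2])
  have e1: "((\<psi> \<circ> G) \<circ> Z) = (\<lambda>\<omega>. \<psi> (ead_Y P Etot sel (\<lambda>s. X s \<omega>) t))"
    unfolding Z_def G_def comp_def
    by (intro ext arg_cong[where f=\<psi>] ead_Y_cong) simp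
  have e2: "((\<phi> \<circ> (\<lambda>w. w t)) \<circ> W) = (\<lambda>\<omega>. \<phi> (X t \<omega>))"
    unfolding W_def comp_def by simp
  have r1: "random_variable borel ((\<psi> \<circ> G) \<circ> Z)" using indep_var_rv1[OF iv2] .
  have r2: "random_variable borel ((\<phi> \<circ> (\<lambda>w. w t)) \<circ> W)" using indep_var_rv2[OF iv2] .
  have i1: "integrable M ((\<psi> \<circ> G) \<circ> Z)"
    by (rule integrable_const_bound[where B=Bp]) (use r1 psi(2) in \<open>auto simp: e1\<close>)
  have i2: "integrable M ((\<phi> \<circ> (\<lambda>w. w t)) \<circ> W)"
    by (rule integrable_const_bound[where B=Bf]) (use r2 phi(2) in auto)
  show ?thesis
    using indep_var_lebesgue_integral[OF iv2 i1 i2] unfolding e1 e2 .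
qed


lemma Y_meas:
  fixes M :: "'a measure" and X :: "nat \<Rightarrow> 'a \<Rightarrow> ('k::finite \<Rightarrow> real)"
    and sel :: "nat \<Rightarrow> ('k \<Rightarrow> real) \<Rightarrow> ('k \<Rightarrow> real) \<Rightarrow> real"
  assumes X_meas: "\<And>t. X t \<in> M \<rightarrow>\<^sub>M vspace"
    and sm: "\<And>t. (\<lambda>(x, y). sel t x y) \<in> borel_measurable (vspace \<Otimes>\<^sub>M vspace)"
  shows "(\<lambda>\<omega>. ead_Y P Etot sel (\<lambda>s. X s \<omega>) t) \<in> M \<rightarrow>\<^sub>M vspace"
proof -
  define Z where "Z = (\<lambda>\<omega>. restrict (\<lambda>i. X i \<omega>) {..<t})"
  have Zm: "Z \<in> M \<rightarrow>\<^sub>M PiM {..<t} (\<lambda>_. vspace)"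
    unfolding Z_def by (rule measurable_restrict) (rule X_meas)
  have Gm: "(\<lambda>z. ead_Y P Etot sel (\<lambda>s. z s) t) \<in> PiM {..<t} (\<lambda>_. vspace) \<rightarrow>\<^sub>M vspace"
    by (rule ead_Y_meas[OF sm]) simp
  have e: "(\<lambda>\<omega>. ead_Y P Etot sel (\<lambda>s. Z \<omega> s) t) = (\<lambda>\<omega>. ead_Y P Etot sel (\<lambda>s. X s \<omega>) t)"
    unfolding Z_def by (intro ext ead_Y_cong) simp
  show ?thesis using measurable_compose[OF Zm Gm] unfolding e .
qed


theorem theorem2:
  fixes M :: "'a measure"
    and X :: "nat \<Rightarrow> 'a \<Rightarrow> ('k::finite \<Rightarrow> real)"
    and D :: "('k \<Rightarrow> real) measure"
    and P V Tmax \<epsilon> :: real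
    and Etot :: "'k \<Rightarrow> real"
    and \<kappa> :: "('k \<Rightarrow> real) \<Rightarrow> real measure"
    and sel :: "nat \<Rightarrow> ('k \<Rightarrow> real) \<Rightarrow> ('k \<Rightarrow> real) \<Rightarrow> real"
    and Y :: "nat \<Rightarrow> 'a \<Rightarrow> 'k \<Rightarrow> real"
    and Sstar B2 :: "_"
  assumes M: "prob_space M"
    and X_meas: "\<And>t. X t \<in> M \<rightarrow>\<^sub>M vspace"
    and X_indep: "prob_space.indep_vars M (\<lambda>_. vspace) X UNIV"
    and X_distr: "\<And>t. distr M vspace (X t) = D"
    and X_nonneg: "\<And>t \<omega> k. \<omega> \<in> space M \<Longrightarrow> 0 \<le> X t \<omega> k"
    and V: "V > 0" and P: "P > 0" and Tmax: "0 \<le> Tmax"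
    and Etot: "\<And>k. Etot k > 0"
    and eps: "\<epsilon> > 0"
    and Sstar_def: "Sstar \<equiv> opt_Stot M X P Tmax Etot"
    and \<kappa>_meas: "\<kappa> \<in> D \<rightarrow>\<^sub>M prob_algebra borel"
    and \<kappa>_range: "\<And>x. AE ts in \<kappa> x. 0 \<le> ts \<and> ts \<le> Tmax"
    and stat_S: "ereal (\<integral>x. (\<integral>ts. Stot ts x \<partial>\<kappa> x) \<partial>D) = Sstar"
    and stat_E: "\<And>k. (\<integral>x. (\<integral>ts. ts * P \<partial>\<kappa> x) \<partial>D) \<le> Etot k - \<epsilon>"
    and sel_range: "\<And>t x y. 0 \<le> sel t x y \<and> sel t x y \<le> Tmax"
    and sel_max: "\<And>t x y ts. 0 \<le> ts \<Longrightarrow> ts \<le> Tmax \<Longrightarrow> ead_obj V P x y ts \<le> ead_obj V P x y (sel t x y)"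
    and sel_meas: "\<And>t. (\<lambda>(x, y). sel t x y) \<in> borel_measurable (vspace \<Otimes>\<^sub>M vspace)"
    and Y_def: "Y \<equiv> (\<lambda>t \<omega>. ead_Y P Etot sel (\<lambda>s. X s \<omega>) t)"
    and B2_def: "B2 \<equiv> 1/2 * real CARD('k) * ((Tmax * P)^2 + (Max (range Etot))^2)"
  shows "(\<forall>t. AE \<omega> in M.
            real_cond_exp M (vimage_algebra (space M) (Y t) vspace)
               (\<lambda>\<omega>. Lyap (Y (Suc t) \<omega>) - Lyap (Y t \<omega>)) \<omega>
          - V * real_cond_exp M (vimage_algebra (space M) (Y t) vspace)
               (\<lambda>\<omega>. Stot (sel t (X t \<omega>) (Y t \<omega>)) (X t \<omega>)) \<omega>
          \<le> B2 - \<epsilon> * (\<Sum>k\<in>UNIV. Y t \<omega> k) - V * real_of_ereal Sstar)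
      \<and> limsup (\<lambda>T. ereal (1 / real T * (\<Sum>t<T. \<Sum>k\<in>UNIV. (\<integral>\<omega>. Y t \<omega> k \<partial>M))))
          \<le> ereal ((B2 + V * real CARD('k)) / \<epsilon>)
      \<and> liminf (\<lambda>T. ereal (1 / real T * (\<Sum>t<T. (\<integral>\<omega>. Stot (sel t (X t \<omega>) (Y t \<omega>)) (X t \<omega>) \<partial>M))))
          \<ge> Sstar - ereal (B2 / V)"
proof -
  interpret prob_space M by (rule M)
  have spv: "space vspace = (UNIV :: ('k \<Rightarrow> real) set)" by (simp add: vspace_def space_PiM)
  have spD: "space D = UNIV" using X_distr[of 0] spv by (metis space_distr)
  have setsD: "sets D = sets vspace" using X_distr[of 0] by (metis sets_distr)
  have Yeq: "\<And>t \<omega>. Y t \<omega> = ead_Y P Etot sel (\<lambda>s. X s \<omega>) t" by (simp add: Y_def)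
  have Ym: "\<And>t. Y t \<in> M \<rightarrow>\<^sub>M vspace"
  proof -
    fix t show "Y t \<in> M \<rightarrow>\<^sub>M vspace" using Y_meas[OF X_meas sel_meas] Y_def by simp
  qed
  have comp_m: "\<And>f N. f \<in> N \<rightarrow>\<^sub>M vspace \<Longrightarrow> (\<lambda>\<omega>. f \<omega> k) \<in> borel_measurable N" for k :: 'k
    unfolding vspace_def by (erule measurable_compose) (rule measurable_component_singleton, simp)
  have Ykm[measurable]: "\<And>t k. (\<lambda>\<omega>. Y t \<omega> k) \<in> borel_measurable M" using comp_m Ym by blast
  have Xkm[measurable]: "\<And>t k. (\<lambda>\<omega>. X t \<omega> k) \<in> borel_measurable M" using comp_m X_meas by blast
  have Y_nn: "\<And>t \<omega> k. 0 \<le> Y t \<omega> k"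
    unfolding Yeq by (rule ead_Y_nonneg) (use sel_range P in auto)
  have Y_le: "\<And>t \<omega> k. Y t \<omega> k \<le> real t * (Tmax * P)"
    unfolding Yeq by (rule ead_Y_le) (use sel_range P Etot in \<open>auto intro: less_imp_le\<close>)
  have kprob: "\<And>x. prob_space (\<kappa> x)" and ksets: "\<And>x. sets (\<kappa> x) = sets borel"
    using measurable_space[OF \<kappa>_meas] spD by (auto simp: space_prob_algebra)
  have Fk_bnd: "\<And>ts c. 0 \<le> Fk ts c \<and> Fk ts c \<le> 1" by (simp add: Fk_def)
  have Stot_bnd: "\<And>ts (x::'k\<Rightarrow>real). 0 \<le> Stot ts x \<and> Stot ts x \<le> real CARD('k)"
  proof -
    fix ts and x :: "'k \<Rightarrow> real"
    have "Stot ts x \<le> (\<Sum>k\<in>(UNIV::'k set). 1)" unfolding Stot_def by (rule sum_mono) (use Fk_bnd in auto)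
    moreover have "0 \<le> Stot ts x" unfolding Stot_def by (rule sum_nonneg) (use Fk_bnd in auto)
    ultimately show "0 \<le> Stot ts x \<and> Stot ts x \<le> real CARD('k)" by simp
  qed
  have Stot_m: "(\<lambda>ts. Stot ts x) \<in> borel_measurable (\<kappa> x)" for x :: "'k \<Rightarrow> real"
  proof -
    have "(\<lambda>ts. Stot ts x) \<in> borel_measurable borel" unfolding Stot_def Fk_def by measurable
    then show ?thesis by (subst measurable_cong_sets[OF ksets[of x] refl])
  qed
  have tsP_int: "integrable (\<kappa> x) (\<lambda>ts. ts * P)" for x
  proof -
    interpret K: prob_space "\<kappa> x" by (rule kprob)
    have "(\<lambda>ts. ts * P) \<in> borel_measurable (\<kappa> x)"
      by (subst measurable_cong_sets[OF ksets[of x] refl]) measurable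
    moreover have "AE ts in \<kappa> x. norm (ts * P) \<le> Tmax * P"
      using \<kappa>_range[of x] by eventually_elim (use P in \<open>auto simp: abs_mult intro: mult_right_mono\<close>)
    ultimately show ?thesis by (intro K.integrable_const_bound[where B="Tmax*P"])
  qed
  have Stot_int: "integrable (\<kappa> x) (\<lambda>ts. Stot ts x)" for x :: "'k \<Rightarrow> real"
  proof -
    interpret K: prob_space "\<kappa> x" by (rule kprob)
    show ?thesis by (rule K.integrable_const_bound[where B="real CARD('k)"]) (use Stot_bnd Stot_m in auto)
  qed
  define a where "a x = (\<integral>ts. Stot ts x \<partial>\<kappa> x)" for x
  define b where "b x = (\<integral>ts. ts * P \<partial>\<kappa> x)" for x
  have a_bnd: "0 \<le> a x \<and> a x \<le> real CARD('k)" for x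
  proof -
    interpret K: prob_space "\<kappa> x" by (rule kprob)
    show ?thesis unfolding a_def using Stot_bnd Stot_int[of x]
      by (auto intro!: K.integral_le_const K.integral_ge_const)
  qed
  have b_bnd: "0 \<le> b x \<and> b x \<le> Tmax * P" for x
  proof -
    interpret K: prob_space "\<kappa> x" by (rule kprob)
    have "AE ts in \<kappa> x. 0 \<le> ts * P \<and> ts * P \<le> Tmax * P"
      using \<kappa>_range[of x] by eventually_elim (use P in \<open>auto intro: mult_right_mono\<close>)
    then have A1: "AE ts in \<kappa> x. 0 \<le> ts * P" and A2: "AE ts in \<kappa> x. ts * P \<le> Tmax * P"
      by (auto elim: AE_mp)
    show ?thesis unfolding b_def
      using K.integral_ge_const[OF tsP_int[of x] A1] K.integral_le_const[OF tsP_int[of x] A2] by blast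
  qed
  have \<kappa>_sub: "\<kappa> \<in> vspace \<rightarrow>\<^sub>M subprob_algebra borel"
    using measurable_prob_algebraD[OF \<kappa>_meas] by (subst measurable_cong_sets[OF setsD[symmetric] refl])
  have b_meas[measurable]: "b \<in> borel_measurable vspace"
  proof -
    have "(\<lambda>N. integral\<^sup>L N (\<lambda>ts. ts * P)) \<in> subprob_algebra borel \<rightarrow>\<^sub>M borel"
      by (rule integral_measurable_subprob_algebra) measurable
    from measurable_compose[OF \<kappa>_sub this] show ?thesis unfolding b_def .
  qed
  have a_eq: "a x = (\<Sum>k\<in>UNIV. Sigma_Algebra.measure (\<kappa> x) {ts. x k \<le> ts})" for x
  proof -
    interpret K: prob_space "\<kappa> x" by (rule kprob)
    have fi: "integrable (\<kappa> x) (\<lambda>ts. Fk ts (x k))" for k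
    proof -
      have "(\<lambda>ts. Fk ts (x k)) \<in> borel_measurable borel" unfolding Fk_def by measurable
      then have "(\<lambda>ts. Fk ts (x k)) \<in> borel_measurable (\<kappa> x)"
        by (subst measurable_cong_sets[OF ksets[of x] refl])
      then show ?thesis by (intro K.integrable_const_bound[where B=1]) (use Fk_bnd in auto)
    qed
    have "a x = (\<Sum>k\<in>UNIV. \<integral>ts. Fk ts (x k) \<partial>\<kappa> x)"
      unfolding a_def Stot_def by (rule Bochner_Integration.integral_sum) (rule fi)
    also have "\<dots> = (\<Sum>k\<in>UNIV. \<integral>ts. indicator {ts. x k \<le> ts} ts \<partial>\<kappa> x)"
      by (intro sum.cong refl Bochner_Integration.integral_cong) (auto simp: Fk_def indicator_def)
    also have "\<dots> = (\<Sum>k\<in>UNIV. Sigma_Algebra.measure (\<kappa> x) {ts. x k \<le> ts})"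
      using sets_eq_imp_space_eq[OF ksets[of x]] by simp
    finally show ?thesis .
  qed
  have a_meas[measurable]: "a \<in> borel_measurable vspace"
  proof -
    have "(\<lambda>x. Sigma_Algebra.measure (\<kappa> x) {ts. x k \<le> ts}) \<in> borel_measurable D" for k
    proof (rule measure_measurable_prob_algebra2[OF _ \<kappa>_meas])
      have "(\<lambda>x. x k) \<in> borel_measurable vspace" using comp_m[of "\<lambda>x. x" vspace k] by simp
      then have [measurable]: "(\<lambda>x. x k) \<in> borel_measurable D"
        by (subst measurable_cong_sets[OF setsD refl])
      have "Sigma (space D) (\<lambda>x. {ts. x k \<le> ts}) = {p \<in> space (D \<Otimes>\<^sub>M borel). fst p k \<le> snd p}"
        by (auto simp: space_pair_measure spD)
      also have "\<dots> \<in> sets (D \<Otimes>\<^sub>M borel)" by measurable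
      finally show "Sigma (space D) (\<lambda>x. {ts. x k \<le> ts}) \<in> sets (D \<Otimes>\<^sub>M borel)" .
    qed
    then have "(\<lambda>x. Sigma_Algebra.measure (\<kappa> x) {ts. x k \<le> ts}) \<in> borel_measurable vspace" for k
      by (subst measurable_cong_sets[OF setsD[symmetric] refl])
    then show ?thesis unfolding a_eq[abs_def] by measurable
  qed
  have key_x: "V * a x - (\<Sum>k\<in>UNIV. y k) * b x \<le> V * Stot (sel t x y) x - (\<Sum>k\<in>UNIV. y k) * (sel t x y * P)"
    for t and x y :: "'k \<Rightarrow> real"
  proof -
    interpret K: prob_space "\<kappa> x" by (rule kprob)
    let ?c = "\<Sum>k\<in>UNIV. y k"
    have e: "V * ead_obj V P x y ts = V * Stot ts x - ?c * (ts * P)" for ts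
    proof -
      have "(\<Sum>k\<in>UNIV. y k / V * (ts * P)) = (\<Sum>k\<in>UNIV. y k) / V * (ts * P)"
        by (simp add: sum_distrib_right sum_divide_distrib)
      then show ?thesis using V unfolding ead_obj_def Stot_def sum_subtractf
        by (simp add: right_diff_distrib)
    qed
    have int: "integrable (\<kappa> x) (\<lambda>ts. V * Stot ts x - ?c * (ts * P))"
      using Stot_int[of x] tsP_int[of x] by auto
    have "AE ts in \<kappa> x. V * ead_obj V P x y ts \<le> V * ead_obj V P x y (sel t x y)"
      using \<kappa>_range[of x] by eventually_elim (use V sel_max in \<open>auto intro: mult_left_mono\<close>)
    then have "AE ts in \<kappa> x. V * Stot ts x - ?c * (ts * P) \<le> V * Stot (sel t x y) x - ?c * (sel t x y * P)"
      unfolding e .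
    from K.integral_le_const[OF int this]
    have "(\<integral>ts. V * Stot ts x - ?c * (ts * P) \<partial>\<kappa> x) \<le> V * Stot (sel t x y) x - ?c * (sel t x y * P)" .
    moreover have "(\<integral>ts. V * Stot ts x - ?c * (ts * P) \<partial>\<kappa> x) = V * a x - ?c * b x"
      unfolding a_def b_def using Stot_int[of x] tsP_int[of x] by simp
    ultimately show ?thesis by simp
  qed
  define R where "R t \<omega> = B2 - (\<Sum>k\<in>UNIV. Y t \<omega> k * Etot k) - (V * a (X t \<omega>) - (\<Sum>k\<in>UNIV. Y t \<omega> k) * b (X t \<omega>))" for t \<omega>
  have Emax: "Etot k \<le> Max (range Etot)" for k by (rule Max_ge) auto
  have pw: "Lyap (Y (Suc t) \<omega>) - Lyap (Y t \<omega>) - V * Stot (sel t (X t \<omega>) (Y t \<omega>)) (X t \<omega>) \<le> R t \<omega>" for t \<omega>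
  proof -
    define y where "y = Y t \<omega>"
    define x where "x = X t \<omega>"
    define s where "s = sel t x y"
    have YS: "Y (Suc t) \<omega> k = max (y k - Etot k) 0 + s * P" for k
      unfolding y_def s_def x_def Yeq by simp
    have sP: "0 \<le> s * P" "s * P \<le> Tmax * P" using sel_range[of t x y] P unfolding s_def
      by (auto intro: mult_right_mono)
    have d: "(max (y k - Etot k) 0 + s * P)^2 - (y k)^2 \<le> (Etot k)^2 + (s*P)^2 - 2 * y k * (Etot k - s * P)" for k
      by (rule drift_k) (use Y_nn sP Etot[of k] in \<open>auto simp: y_def\<close>)
    have bb: "(Etot k)^2 + (s*P)^2 \<le> (Max (range Etot))^2 + (Tmax * P)^2" for k
      using power_mono[OF Emax[of k], of 2] power_mono[OF sP(2), of 2] Etot[of k] sP(1) by auto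
    have "Lyap (Y (Suc t) \<omega>) - Lyap (Y t \<omega>) = 1/2 * (\<Sum>k\<in>UNIV. (max (y k - Etot k) 0 + s * P)^2 - (y k)^2)"
      unfolding Lyap_def YS y_def by (simp add: sum_subtractf algebra_simps)
    also have "\<dots> \<le> 1/2 * (\<Sum>k\<in>UNIV. (Etot k)^2 + (s*P)^2 - 2 * y k * (Etot k - s * P))"
      by (intro mult_left_mono sum_mono d) auto
    also have "\<dots> = 1/2 * (\<Sum>k\<in>UNIV. (Etot k)^2 + (s*P)^2) - (\<Sum>k\<in>UNIV. y k * Etot k) + (\<Sum>k\<in>UNIV. y k) * (s * P)"
      by (simp add: sum_subtractf sum.distrib sum_distrib_left sum_distrib_right algebra_simps)
    also have "1/2 * (\<Sum>k\<in>UNIV. (Etot k)^2 + (s*P)^2) \<le> 1/2 * (\<Sum>k\<in>(UNIV::'k set). (Max (range Etot))^2 + (Tmax * P)^2)"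
      by (intro mult_left_mono sum_mono bb) auto
    also have "\<dots> = B2" unfolding B2_def by simp
    finally have L: "Lyap (Y (Suc t) \<omega>) - Lyap (Y t \<omega>) \<le> B2 - (\<Sum>k\<in>UNIV. y k * Etot k) + (\<Sum>k\<in>UNIV. y k) * (s * P)"
      by simp
    have K: "V * a x - (\<Sum>k\<in>UNIV. y k) * b x \<le> V * Stot s x - (\<Sum>k\<in>UNIV. y k) * (s * P)"
      unfolding s_def by (rule key_x)
    show ?thesis using L K unfolding R_def s_def x_def y_def by simp
  qed
  define ca where "ca = (\<integral>x. a x \<partial>D)"
  define cb where "cb = (\<integral>x. b x \<partial>D)"
  have ca_S: "ereal ca = Sstar" using stat_S unfolding ca_def a_def .
  have cb_E: "cb \<le> Etot k - \<epsilon>" for k using stat_E[of k] unfolding cb_def b_def .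
  have intD: "(\<integral>\<omega>. f (X t \<omega>) \<partial>M) = (\<integral>x. f x \<partial>D)" if "f \<in> borel_measurable vspace" for f :: "('k \<Rightarrow> real) \<Rightarrow> real" and t
    using integral_distr[OF X_meas[of t] that] X_distr[of t] by simp
  have selm[measurable]: "(\<lambda>\<omega>. sel t (X t \<omega>) (Y t \<omega>)) \<in> borel_measurable M" for t
    using measurable_compose[OF measurable_Pair[OF X_meas Ym] sel_meas[of t]] by simp
  have Lyap_bnd: "0 \<le> Lyap (Y t \<omega>) \<and> Lyap (Y t \<omega>) \<le> 1/2 * real CARD('k) * (real t * (Tmax * P))^2" for t \<omega>
  proof -
    have "(Y t \<omega> k)^2 \<le> (real t * (Tmax * P))^2" for k
      by (rule power_mono[OF Y_le Y_nn])
    then have "(\<Sum>k\<in>UNIV. (Y t \<omega> k)^2) \<le> (\<Sum>k\<in>(UNIV::'k set). (real t * (Tmax * P))^2)"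
      by (intro sum_mono)
    then show ?thesis unfolding Lyap_def by (auto intro: sum_nonneg)
  qed
  have Lyapm[measurable]: "(\<lambda>\<omega>. Lyap (Y t \<omega>)) \<in> borel_measurable M" for t
    unfolding Lyap_def by measurable
  have aXm[measurable]: "(\<lambda>\<omega>. a (X t \<omega>)) \<in> borel_measurable M" for t
    using measurable_compose[OF X_meas a_meas] .
  have bXm[measurable]: "(\<lambda>\<omega>. b (X t \<omega>)) \<in> borel_measurable M" for t
    using measurable_compose[OF X_meas b_meas] .
  have Sm[measurable]: "(\<lambda>\<omega>. Stot (sel t (X t \<omega>) (Y t \<omega>)) (X t \<omega>)) \<in> borel_measurable M" for t
    unfolding Stot_def Fk_def by measurable
  have int_f1: "integrable M (\<lambda>\<omega>. Lyap (Y (Suc t) \<omega>) - Lyap (Y t \<omega>))" for t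
  proof -
    have "integrable M (\<lambda>\<omega>. Lyap (Y t \<omega>))" for t
      by (rule integrable_const_bound[where B="1/2 * real CARD('k) * (real t * (Tmax * P))^2"]) (use Lyap_bnd in auto)
    then show ?thesis by auto
  qed
  have int_f2: "integrable M (\<lambda>\<omega>. Stot (sel t (X t \<omega>) (Y t \<omega>)) (X t \<omega>))" for t
    by (rule integrable_const_bound[where B="real CARD('k)"]) (use Stot_bnd in auto)
  have int_Yk: "integrable M (\<lambda>\<omega>. Y t \<omega> k)" for t k
    by (rule integrable_const_bound[where B="real t * (Tmax * P)"]) (use Y_nn Y_le in auto)
  have int_Ykb: "integrable M (\<lambda>\<omega>. Y t \<omega> k * f (X t \<omega>))" if "f \<in> borel_measurable vspace" "\<And>x. \<bar>f x\<bar> \<le> C" for t k and f :: "('k \<Rightarrow> real) \<Rightarrow> real" and C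
  proof -
    have [measurable]: "(\<lambda>\<omega>. f (X t \<omega>)) \<in> borel_measurable M" using measurable_compose[OF X_meas that(1)] .
    show ?thesis
    proof (rule integrable_const_bound[where B="real t * (Tmax * P) * C"])
      show "AE \<omega> in M. norm (Y t \<omega> k * f (X t \<omega>)) \<le> real t * (Tmax * P) * C"
      proof (intro AE_I2)
        fix \<omega>
        have "\<bar>Y t \<omega> k\<bar> * \<bar>f (X t \<omega>)\<bar> \<le> real t * (Tmax * P) * C"
          using Y_nn[of t \<omega> k] Y_le[of t \<omega> k] that(2)[of "X t \<omega>"]
          by (intro mult_mono) auto
        then show "norm (Y t \<omega> k * f (X t \<omega>)) \<le> real t * (Tmax * P) * C"
          by (simp add: abs_mult)
      qed
    qed measurable
  qed
  have int_aX: "integrable M (\<lambda>\<omega>. a (X t \<omega>))" for t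
    by (rule integrable_const_bound[where B="real CARD('k)"]) (use a_bnd in auto)
  have int_R: "integrable M (R t)" for t
  proof -
    have "integrable M (\<lambda>\<omega>. Y t \<omega> k * b (X t \<omega>))" for k
      by (rule int_Ykb[of b "Tmax*P"]) (use b_bnd in auto)
    then have "integrable M (\<lambda>\<omega>. (\<Sum>k\<in>UNIV. Y t \<omega> k) * b (X t \<omega>))"
      by (simp add: sum_distrib_right)
    then show ?thesis unfolding R_def[abs_def] using int_Yk int_aX by auto
  qed
  have Dprob: "prob_space D" using prob_space_distr[OF X_meas[of 0]] X_distr[of 0] by simp
  interpret Dp: prob_space D by (rule Dprob)
  have int_aD: "integrable D a"
    by (rule Dp.integrable_const_bound[ where B="real CARD('k)"])
       (use a_bnd in \<open>auto simp: measurable_cong_sets[OF setsD refl]\<close>)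
  have int_bD: "integrable D b"
    by (rule Dp.integrable_const_bound[where B="Tmax * P"])
       (use b_bnd in \<open>auto simp: measurable_cong_sets[OF setsD refl]\<close>)
  have intbnd: "integrable M h" if "h \<in> borel_measurable M" "integrable M f" "\<And>\<omega>. \<omega> \<in> space M \<Longrightarrow> \<bar>h \<omega>\<bar> \<le> \<bar>f \<omega>\<bar>"
    for h f :: "'a \<Rightarrow> real"
    by (rule Bochner_Integration.integrable_bound[OF that(2) that(1)]) (use that(3) in auto)
  define g where "g t \<omega> = B2 - (\<Sum>k\<in>UNIV. Y t \<omega> k * Etot k) - V * ca + (\<Sum>k\<in>UNIV. Y t \<omega> k) * cb" for t \<omega>
  have int_g: "integrable M (g t)" for t
    unfolding g_def[abs_def] using int_Yk by (auto simp: sum_distrib_right)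
  have part1: "(AE \<omega> in M.
            real_cond_exp M (vimage_algebra (space M) (Y t) vspace)
               (\<lambda>\<omega>. Lyap (Y (Suc t) \<omega>) - Lyap (Y t \<omega>)) \<omega>
          - V * real_cond_exp M (vimage_algebra (space M) (Y t) vspace)
               (\<lambda>\<omega>. Stot (sel t (X t \<omega>) (Y t \<omega>)) (X t \<omega>)) \<omega>
          \<le> B2 - \<epsilon> * (\<Sum>k\<in>UNIV. Y t \<omega> k) - V * real_of_ereal Sstar)
          \<and> (\<integral>\<omega>. R t \<omega> \<partial>M) = (\<integral>\<omega>. g t \<omega> \<partial>M)" for t
  proof -
    define F where "F = vimage_algebra (space M) (Y t) vspace"
    have subalg: "subalgebra M F" unfolding subalgebra_def F_def
      using sets_image_in_sets[OF refl Ym[of t]] by simp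
    interpret S: finite_measure_subalgebra M F
      by (intro finite_measure_subalgebra.intro finite_measure_subalgebra_axioms.intro subalg finite_measure_axioms)
    have YF: "Y t \<in> F \<rightarrow>\<^sub>M vspace" unfolding F_def
      by (rule measurable_vimage_algebra1) (use measurable_space[OF Ym[of t]] in auto)
    have YkF[measurable]: "(\<lambda>\<omega>. Y t \<omega> k) \<in> borel_measurable F" for k using comp_m[OF YF] .
    have charact: "AE \<omega> in M. real_cond_exp M F (R t) \<omega> = g t \<omega>"
    proof (rule S.real_cond_exp_charact)
      fix A assume A: "A \<in> sets F"
      then obtain B where B: "B \<in> sets vspace" "A = Y t -` B \<inter> space M"
        using sets_vimage_algebra2[of "Y t" "space M" vspace] measurable_space[OF Ym[of t]]
        unfolding F_def by auto
      define ind where "ind \<omega> = (indicator B (Y t \<omega>) :: real)" for \<omega>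
      have indm[measurable]: "ind \<in> borel_measurable M"
        unfolding ind_def using measurable_compose[OF Ym[of t] borel_measurable_indicator[OF B(1)]] .
      have ind01: "0 \<le> ind \<omega> \<and> ind \<omega> \<le> 1" for \<omega> by (simp add: ind_def indicator_def)
      have set_int: "(\<integral>\<omega>\<in>A. h \<omega> \<partial>M) = (\<integral>\<omega>. ind \<omega> * h \<omega> \<partial>M)" for h :: "'a \<Rightarrow> real"
        unfolding set_lebesgue_integral_def B(2) ind_def
        by (intro Bochner_Integration.integral_cong) (auto simp: indicator_def)
          have abnd2: "\<bar>a x - ca\<bar> \<le> real CARD('k) + \<bar>ca\<bar>" for x
        using a_bnd[of x] by (auto simp: abs_if)
      have bbnd2: "\<bar>b x - cb\<bar> \<le> Tmax * P + \<bar>cb\<bar>" for x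
        using b_bnd[of x] by (auto simp: abs_if)
      have zero1: "(\<integral>\<omega>. ind \<omega> * (a (X t \<omega>) - ca) \<partial>M) = 0"
      proof -
        have "(\<integral>\<omega>. ind \<omega> * (a (X t \<omega>) - ca) \<partial>M) = (\<integral>\<omega>. ind \<omega> \<partial>M) * (\<integral>\<omega>. a (X t \<omega>) - ca \<partial>M)"
          unfolding ind_def Yeq
          by (rule indep_prod[OF M X_meas X_indep sel_meas, where Bp=1 and Bf="real CARD('k) + \<bar>ca\<bar>"])
             (use B(1) abnd2 in \<open>auto simp: indicator_def\<close>)
        also have "(\<integral>\<omega>. a (X t \<omega>) - ca \<partial>M) = (\<integral>x. a x - ca \<partial>D)"
          by (rule intD) measurable
        also have "\<dots> = 0" using int_aD Dp.prob_space unfolding ca_def by simp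
        finally show ?thesis by simp
      qed
      have zero2: "(\<integral>\<omega>. (ind \<omega> * Y t \<omega> k) * (b (X t \<omega>) - cb) \<partial>M) = 0" for k
      proof -
        have "(\<integral>\<omega>. (ind \<omega> * Y t \<omega> k) * (b (X t \<omega>) - cb) \<partial>M) = (\<integral>\<omega>. ind \<omega> * Y t \<omega> k \<partial>M) * (\<integral>\<omega>. b (X t \<omega>) - cb \<partial>M)"
          unfolding ind_def Yeq
          by (rule indep_prod[OF M X_meas X_indep sel_meas, where \<psi>="\<lambda>y. indicator B y * y k" and Bp="real t * (Tmax * P)" and Bf="Tmax * P + \<bar>cb\<bar>"])
             (use B(1) bbnd2 Y_nn Y_le Tmax P comp_m[of "\<lambda>x. x" vspace k] in \<open>auto simp: indicator_def Yeq\<close>)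
        also have "(\<integral>\<omega>. b (X t \<omega>) - cb \<partial>M) = (\<integral>x. b x - cb \<partial>D)"
          by (rule intD) measurable
        also have "\<dots> = 0" using int_bD Dp.prob_space unfolding cb_def by simp
        finally show ?thesis by simp
      qed
      have i1: "integrable M (\<lambda>\<omega>. ind \<omega> * g t \<omega>)"
        by (rule intbnd[OF _ int_g[of t]]) (use ind01 in \<open>auto simp: abs_mult g_def[abs_def] intro!: mult_left_le_one_le\<close>)
      have i2: "integrable M (\<lambda>\<omega>. ind \<omega> * (a (X t \<omega>) - ca))"
        by (rule intbnd[of _ "\<lambda>\<omega>. a (X t \<omega>) - ca"]) (use ind01 int_aX in \<open>auto simp: abs_mult intro!: mult_left_le_one_le\<close>)
      have i3: "integrable M (\<lambda>\<omega>. (ind \<omega> * Y t \<omega> k) * (b (X t \<omega>) - cb))" for k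
      proof (rule intbnd[of _ "\<lambda>\<omega>. Y t \<omega> k * (b (X t \<omega>) - cb)"])
        show "integrable M (\<lambda>\<omega>. Y t \<omega> k * (b (X t \<omega>) - cb))"
          by (rule int_Ykb[of "\<lambda>x. b x - cb" "Tmax * P + \<bar>cb\<bar>"]) (use bbnd2 in auto)
      qed (use ind01 in \<open>auto simp: abs_mult mult.assoc intro!: mult_left_le_one_le\<close>)
      have pe: "ind \<omega> * R t \<omega> = ind \<omega> * g t \<omega> - V * (ind \<omega> * (a (X t \<omega>) - ca))
                 + (\<Sum>k\<in>UNIV. (ind \<omega> * Y t \<omega> k) * (b (X t \<omega>) - cb))" for \<omega>
        unfolding R_def g_def
        by (simp add: sum_distrib_left sum_distrib_right sum_subtractf right_diff_distrib algebra_simps)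
      have "(\<integral>\<omega>. ind \<omega> * R t \<omega> \<partial>M) = (\<integral>\<omega>. ind \<omega> * g t \<omega> - V * (ind \<omega> * (a (X t \<omega>) - ca))
                 + (\<Sum>k\<in>UNIV. (ind \<omega> * Y t \<omega> k) * (b (X t \<omega>) - cb)) \<partial>M)"
        unfolding pe ..
      also have "\<dots> = (\<integral>\<omega>. ind \<omega> * g t \<omega> \<partial>M) - V * (\<integral>\<omega>. ind \<omega> * (a (X t \<omega>) - ca) \<partial>M)
                 + (\<Sum>k\<in>UNIV. \<integral>\<omega>. (ind \<omega> * Y t \<omega> k) * (b (X t \<omega>) - cb) \<partial>M)"
        using i1 i2 i3 by (simp add: Bochner_Integration.integral_sum)
      also have "\<dots> = (\<integral>\<omega>. ind \<omega> * g t \<omega> \<partial>M)" using zero1 zero2 by simp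
      finally show "(\<integral>\<omega>\<in>A. R t \<omega> \<partial>M) = (\<integral>\<omega>\<in>A. g t \<omega> \<partial>M)"
        unfolding set_int .
    next
      show "integrable M (R t)" by (rule int_R)
      show "integrable M (g t)" by (rule int_g)
      show "g t \<in> borel_measurable F" unfolding g_def[abs_def] by measurable
    qed
    let ?f1 = "\<lambda>\<omega>. Lyap (Y (Suc t) \<omega>) - Lyap (Y t \<omega>)"
    let ?f2 = "\<lambda>\<omega>. Stot (sel t (X t \<omega>) (Y t \<omega>)) (X t \<omega>)"
    have i2V: "integrable M (\<lambda>\<omega>. V * ?f2 \<omega>)" using int_f2[of t] by simp
    have d1: "AE \<omega> in M. real_cond_exp M F (\<lambda>\<omega>. ?f1 \<omega> - V * ?f2 \<omega>) \<omega> = real_cond_exp M F ?f1 \<omega> - real_cond_exp M F (\<lambda>\<omega>. V * ?f2 \<omega>) \<omega>"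
      by (rule S.real_cond_exp_diff[OF int_f1 i2V])
    have d2: "AE \<omega> in M. real_cond_exp M F (\<lambda>\<omega>. V * ?f2 \<omega>) \<omega> = V * real_cond_exp M F ?f2 \<omega>"
      by (rule S.real_cond_exp_cmult[OF int_f2])
    have d3: "AE \<omega> in M. real_cond_exp M F (\<lambda>\<omega>. ?f1 \<omega> - V * ?f2 \<omega>) \<omega> \<le> real_cond_exp M F (R t) \<omega>"
      by (rule S.real_cond_exp_mono) (use pw int_f1 i2V int_R in auto)
    have gb: "g t \<omega> \<le> B2 - \<epsilon> * (\<Sum>k\<in>UNIV. Y t \<omega> k) - V * real_of_ereal Sstar" for \<omega>
    proof -
      have "(\<Sum>k\<in>UNIV. Y t \<omega> k * \<epsilon>) \<le> (\<Sum>k\<in>UNIV. Y t \<omega> k * (Etot k - cb))"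
        by (intro sum_mono mult_left_mono) (use cb_E Y_nn in \<open>auto simp: algebra_simps\<close>)
      moreover have "real_of_ereal Sstar = ca" using ca_S by (metis real_of_ereal.simps(1))
      ultimately show ?thesis unfolding g_def
        by (simp add: sum_distrib_left sum_distrib_right sum_subtractf right_diff_distrib algebra_simps)
    qed
    have Rg: "(\<integral>\<omega>. R t \<omega> \<partial>M) = (\<integral>\<omega>. g t \<omega> \<partial>M)"
    proof -
      have "(\<integral>\<omega>. R t \<omega> \<partial>M) = (\<integral>\<omega>. real_cond_exp M F (R t) \<omega> \<partial>M)"
        using S.real_cond_exp_int(2)[OF int_R[of t]] by simp
      also have "\<dots> = (\<integral>\<omega>. g t \<omega> \<partial>M)"
        by (rule integral_cong_AE) (use charact in \<open>auto simp: int_g borel_measurable_integrable\<close>)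
      finally show ?thesis .
    qed
    show ?thesis unfolding F_def[symmetric]
    proof (intro conjI Rg)
      show "AE \<omega> in M. real_cond_exp M F ?f1 \<omega> - V * real_cond_exp M F ?f2 \<omega>
          \<le> B2 - \<epsilon> * (\<Sum>k\<in>UNIV. Y t \<omega> k) - V * real_of_ereal Sstar"
      using d1 d2 d3 charact by eventually_elim (use gb in \<open>auto intro: order_trans\<close>)
    qed
  qed
  define EL where "EL t = (\<integral>\<omega>. Lyap (Y t \<omega>) \<partial>M)" for t
  define st where "st t = (\<integral>\<omega>. Stot (sel t (X t \<omega>) (Y t \<omega>)) (X t \<omega>) \<partial>M)" for t
  define yt where "yt t = (\<Sum>k\<in>UNIV. (\<integral>\<omega>. Y t \<omega> k \<partial>M))" for t
  have int_L: "integrable M (\<lambda>\<omega>. Lyap (Y t \<omega>))" for t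
    by (rule integrable_const_bound[where B="1/2 * real CARD('k) * (real t * (Tmax * P))^2"]) (use Lyap_bnd in auto)
  have EL0: "EL 0 = 0" unfolding EL_def Yeq by (simp add: Lyap_def)
  have EL_nn: "0 \<le> EL t" for t unfolding EL_def using Lyap_bnd by (auto intro: integral_nonneg_AE)
  have st_bnd: "st t \<le> real CARD('k)" for t
    unfolding st_def using Stot_bnd int_f2[of t] by (auto intro!: integral_le_const)
  have yt_nn: "0 \<le> yt t" for t
    unfolding yt_def using Y_nn by (auto intro!: sum_nonneg integral_nonneg_AE)
  have ca_nn: "0 \<le> ca" unfolding ca_def using a_bnd by (auto intro: Bochner_Integration.integral_nonneg)
  have step: "EL (Suc t) - EL t - V * st t \<le> B2 - \<epsilon> * yt t - V * ca" for t
  proof -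
    have "EL (Suc t) - EL t - V * st t = (\<integral>\<omega>. Lyap (Y (Suc t) \<omega>) - Lyap (Y t \<omega>) - V * Stot (sel t (X t \<omega>) (Y t \<omega>)) (X t \<omega>) \<partial>M)"
      unfolding EL_def st_def using int_L int_f2 by simp
    also have "\<dots> \<le> (\<integral>\<omega>. R t \<omega> \<partial>M)"
      by (rule integral_mono) (use pw int_L int_f2 int_R in auto)
    also have "\<dots> = (\<integral>\<omega>. g t \<omega> \<partial>M)" using part1[of t] by blast
    also have "\<dots> \<le> (\<integral>\<omega>. B2 - \<epsilon> * (\<Sum>k\<in>UNIV. Y t \<omega> k) - V * real_of_ereal Sstar \<partial>M)"
    proof (rule integral_mono)
      show "integrable M (\<lambda>\<omega>. B2 - \<epsilon> * (\<Sum>k\<in>UNIV. Y t \<omega> k) - V * real_of_ereal Sstar)"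
        using int_Yk by auto
      show "g t \<omega> \<le> B2 - \<epsilon> * (\<Sum>k\<in>UNIV. Y t \<omega> k) - V * real_of_ereal Sstar" for \<omega>
      proof -
        have "(\<Sum>k\<in>UNIV. Y t \<omega> k * \<epsilon>) \<le> (\<Sum>k\<in>UNIV. Y t \<omega> k * (Etot k - cb))"
          by (intro sum_mono mult_left_mono) (use cb_E Y_nn in \<open>auto simp: algebra_simps\<close>)
        moreover have "real_of_ereal Sstar = ca" using ca_S by (metis real_of_ereal.simps(1))
        ultimately show ?thesis unfolding g_def
          by (simp add: sum_distrib_left sum_distrib_right sum_subtractf right_diff_distrib algebra_simps)
      qed
    qed (rule int_g)
    also have "\<dots> = B2 - \<epsilon> * yt t - V * ca"
      using int_Yk ca_S[symmetric] unfolding yt_def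
      by (simp add: Bochner_Integration.integral_sum prob_space)
    finally show ?thesis .
  qed
  have sumineq: "EL T - V * (\<Sum>t<T. st t) \<le> real T * B2 - \<epsilon> * (\<Sum>t<T. yt t) - real T * V * ca" for T
  proof -
    have "EL T - V * (\<Sum>t<T. st t) = (\<Sum>t<T. EL (Suc t) - EL t - V * st t)"
      using sum_lessThan_telescope[of EL T] EL0 by (simp add: sum_subtractf sum_distrib_left)
    also have "\<dots> \<le> (\<Sum>t<T. B2 - \<epsilon> * yt t - V * ca)" by (rule sum_mono) (rule step)
    also have "\<dots> = real T * B2 - \<epsilon> * (\<Sum>t<T. yt t) - real T * V * ca"
      by (simp add: sum_subtractf sum_distrib_left)
    finally show ?thesis .
  qed
  have B2nn: "0 \<le> B2" unfolding B2_def by simp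
  have p2: "1 / real T * (\<Sum>t<T. yt t) \<le> (B2 + V * real CARD('k)) / \<epsilon>" if "T > 0" for T
  proof -
    have "V * (\<Sum>t<T. st t) \<le> V * (real T * real CARD('k))"
      using sum_mono[of "{..<T}" st "\<lambda>_. real CARD('k)"] st_bnd V by (auto intro: mult_left_mono)
    moreover have "0 \<le> real T * V * ca" using ca_nn V by simp
    ultimately have "\<epsilon> * (\<Sum>t<T. yt t) \<le> real T * (B2 + V * real CARD('k))"
      using sumineq[of T] EL_nn[of T] by (simp add: algebra_simps)
    then show ?thesis using that eps by (simp add: field_simps)
  qed
  have p3: "ca - B2 / V \<le> 1 / real T * (\<Sum>t<T. st t)" if "T > 0" for T
  proof -
    have "0 \<le> \<epsilon> * (\<Sum>t<T. yt t)" using yt_nn eps by (simp add: sum_nonneg)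
    then have "real T * V * ca - real T * B2 \<le> V * (\<Sum>t<T. st t)"
      using sumineq[of T] EL_nn[of T] by simp
    then show ?thesis using that V by (simp add: field_simps)
  qed
  show ?thesis
  proof (intro conjI allI)
    show "AE \<omega> in M.
            real_cond_exp M (vimage_algebra (space M) (Y t) vspace)
               (\<lambda>\<omega>. Lyap (Y (Suc t) \<omega>) - Lyap (Y t \<omega>)) \<omega>
          - V * real_cond_exp M (vimage_algebra (space M) (Y t) vspace)
               (\<lambda>\<omega>. Stot (sel t (X t \<omega>) (Y t \<omega>)) (X t \<omega>)) \<omega>
          \<le> B2 - \<epsilon> * (\<Sum>k\<in>UNIV. Y t \<omega> k) - V * real_of_ereal Sstar" for t
      using part1[of t] by blast
    show "limsup (\<lambda>T. ereal (1 / real T * (\<Sum>t<T. \<Sum>k\<in>UNIV. (\<integral>\<omega>. Y t \<omega> k \<partial>M))))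
          \<le> ereal ((B2 + V * real CARD('k)) / \<epsilon>)"
      unfolding yt_def[symmetric]
      by (rule Limsup_bounded, rule eventually_sequentiallyI[of 1]) (use p2 in auto)
    show "liminf (\<lambda>T. ereal (1 / real T * (\<Sum>t<T. (\<integral>\<omega>. Stot (sel t (X t \<omega>) (Y t \<omega>)) (X t \<omega>) \<partial>M))))
          \<ge> Sstar - ereal (B2 / V)"
      unfolding st_def[symmetric] ca_S[symmetric]
      by (rule Liminf_bounded, rule eventually_sequentiallyI[of 1]) (use p3 in auto)
  qed
qed
end
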